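(* Under the standing assumptions below, $\lim_{|v|\to+\infty}\frac{q(s,t,v)}{v}=0$ uniformly in $(s,t)\in[0,\pi]\times\mathbb{T}$.
   Context: $\mathbb{T}=\mathbb{R}/(2\pi\mathbb{Z})$. The distinct values $m^2-n^2$ ($m\in\mathbb{N},n\in\mathbb{N}_0$) are ordered $\dots<\lambda_{-1}<\lambda_0=0<\lambda_1<\dots$. Fix a nonzero integer $k$, $\varepsilon_1\in\,]0,\lambda_k-\lambda_{k-1}[$, $\varepsilon_2$ with $0<\varepsilon_2<\frac{1}{\lambda_k-\lambda_{k-1}-\varepsilon_1}-\max\{0,-\frac{1}{\lambda_{k-1}+\varepsilon_1}\}$, $\mu=\max\{0,-\frac{1}{\lambda_{k-1}+\varepsilon_1}\}+\varepsilon_2$, $p_k=\lambda_{k-1}+\varepsilon_1$, $q_k=\lambda_{k-1}+\varepsilon_1+1/\mu$, and $(a,b)\in\,]p_k,q_k[^2$. Let $p:[0,\pi]\times\mathbb{T}\times\mathbb{R}\to\mathbb{R}$ be continuous with $\lim_{|u|\to+\infty}p(s,t,u)/u=0$ uniformly in $(s,t)$, and such that for each $(s,t)$ the map $u\mapsto au^+-bu^-+p(s,t,u)-p_ku$ is strictly increasing and $u\mapsto au^+-bu^-+p(s,t,u)-q_ku$ is strictly decreasing ($u^+=\max\{u,0\}$, $u^-=u^+-u$). Let $H(u)=\frac12(a-p_k)(u^+)^2+\frac12(b-p_k)(u^-)^2$, $P(s,t,u)=\int_0^up(s,t,\tau)d\tau$, $J=H+P$, and $J^*(s,t,v)=\sup_{u\in\mathbb{R}}[vu-J(s,t,u)]$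 (Fenchel–Legendre transform in $u$), which is $C^1$ in $v$; $H^*(v)=\frac{(v^+)^2}{2(a-p_k)}+\frac{(v^-)^2}{2(b-p_k)}$; $Q(s,t,v)=J^*(s,t,v)-H^*(v)$ and $q=\partial Q/\partial v$. *)

theory Defs
  imports "HOL-Analysis.Analysis"
begin

definition lam_set :: "int set" where
  "lam_set = {int m ^ 2 - int n ^ 2 | m n :: nat. 1 \<le> m}"

definition lam :: "int \<Rightarrow> int" where
  "lam = (THE f. strict_mono f \<and> range f = lam_set \<and> f 0 = 0)"

definition oint :: "(real \<Rightarrow> real) \<Rightarrow> real \<Rightarrow> real" where
  "oint f u = (if 0 \<le> u then integral {0..u} f else - integral {u..0} f)"

end

theory Submission
  imports Defs
begin


lemma quad_deriv:
  fixes F :: "real \<Rightarrow> real"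
  assumes b: "\<And>w. \<bar>F w - F u - f * (w - u)\<bar> \<le> C * (w - u)\<^sup>2"
  shows "(F has_real_derivative f) (at u)"
proof -
  have "((\<lambda>y. (F y - F u) / (y - u) - f) \<longlongrightarrow> 0) (at u)"
  proof (rule Lim_null_comparison)
    show "\<forall>\<^sub>F y in at u. norm ((F y - F u) / (y - u) - f) \<le> \<bar>C\<bar> * \<bar>y - u\<bar>"
    proof -
      have "norm ((F y - F u) / (y - u) - f) \<le> \<bar>C\<bar> * \<bar>y - u\<bar>" if "y \<noteq> u" for y
      proof -
      have ne: "y - u \<noteq> 0" using that by simp
      have "(F y - F u) / (y - u) - f = (F y - F u - f * (y - u)) / (y - u)"
        using ne by (simp add: field_simps)
      hence "norm ((F y - F u) / (y - u) - f) = \<bar>F y - F u - f * (y - u)\<bar> / \<bar>y - u\<bar>"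
        by (simp add: abs_divide)
      also have "\<dots> \<le> C * (y - u)\<^sup>2 / \<bar>y - u\<bar>"
        using b[of y] ne by (intro divide_right_mono) auto
      also have "\<dots> = C * \<bar>y - u\<bar>"
      proof -
        define d where "d = \<bar>y - u\<bar>"
        have d: "d > 0" using ne by (simp add: d_def)
        have "(y - u)\<^sup>2 = d\<^sup>2" by (simp add: d_def)
        moreover have "C * d\<^sup>2 / d = C * d" using d by (simp add: power2_eq_square)
        ultimately show ?thesis by (simp add: d_def)
      qed
      also have "\<dots> \<le> \<bar>C\<bar> * \<bar>y - u\<bar>" by (simp add: mult_right_mono)
      finally show ?thesis .
    qed
    thus ?thesis unfolding eventually_at_filter by (intro always_eventually) auto
    qed
    show "((\<lambda>y. \<bar>C\<bar> * \<bar>y - u\<bar>) \<longlongrightarrow> 0) (at u)"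
      by (rule tendsto_eq_intros refl | simp)+
  qed
  hence "((\<lambda>y. (F y - F u) / (y - u)) \<longlongrightarrow> f) (at u)"
    by (simp add: LIM_zero_iff)
  thus ?thesis by (simp add: has_field_derivative_iff)
qed

lemma oint_deriv:
  fixes f :: "real \<Rightarrow> real"
  assumes cf: "continuous_on UNIV f"
  shows "(oint f has_real_derivative f x) (at x)"
proof -
  define c where "c = min x 0 - 1"
  have eq: "oint f u = integral {c..u} f - integral {c..0} f" if "c < u" for u
  proof (cases "0 \<le> u")
    case True
    have "integral {c..0} f + integral {0..u} f = integral {c..u} f"
      by (rule Henstock_Kurzweil_Integration.integral_combine) (use True c_def cf in \<open>auto intro: integrable_continuous_interval continuous_on_subset\<close>)
    thus ?thesis using True by (simp add: oint_def)
  next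
    case False
    have "integral {c..u} f + integral {u..0} f = integral {c..0} f"
      by (rule Henstock_Kurzweil_Integration.integral_combine) (use False that cf in \<open>auto intro: integrable_continuous_interval continuous_on_subset\<close>)
    thus ?thesis using False by (simp add: oint_def)
  qed
  have "((\<lambda>u. integral {c..u} f) has_real_derivative f x) (at x within {c..x+1})"
    using c_def by (intro integral_has_real_derivative continuous_on_subset[OF cf]) auto
  moreover have "at x within {c..x+1} = at x"
    using c_def by (intro at_within_interior) auto
  ultimately have d1: "((\<lambda>u. integral {c..u} f) has_real_derivative f x) (at x)" by simp
  have "((\<lambda>u. integral {c..u} f - integral {c..0} f) has_real_derivative f x - 0) (at x)"
    by (intro DERIV_diff d1 DERIV_const)
  hence d2: "((\<lambda>u. integral {c..u} f - integral {c..0} f) has_real_derivative f x) (at x)" by simp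
  show ?thesis
    by (rule has_field_derivative_transform_within_open[OF d2, of "{c<..}"])
       (simp_all add: c_def eq)
qed

lemma subgrad:
  fixes F f :: "real \<Rightarrow> real"
  assumes d: "\<And>x. (F has_real_derivative f x) (at x)"
    and m: "\<And>x y. x \<le> y \<Longrightarrow> f x \<le> f y"
  shows "F u + f u * (w - u) \<le> F w"
proof (cases u w rule: linorder_cases)
  case less
  then obtain z where z: "u < z" "z < w" "F w - F u = (w - u) * f z"
    using MVT2[of u w F f] d by blast
  have "f u * (w - u) \<le> f z * (w - u)" using m[of u z] z less by (intro mult_right_mono) auto
  thus ?thesis using z by (simp add: algebra_simps)
next
  case greater
  then obtain z where z: "w < z" "z < u" "F u - F w = (u - w) * f z"
    using MVT2[of w u F f] d by blast
  have "f z * (u - w) \<le> f u * (u - w)" using m[of z u] z greater by (intro mult_right_mono) auto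
  thus ?thesis using z by (simp add: algebra_simps)
qed simp

lemma conj_val:
  fixes F f g :: "real \<Rightarrow> real"
  assumes sub: "\<And>u w. F u + f u * (w - u) \<le> F w"
    and inv: "f (g v) = v"
  shows "(SUP u. v * u - F u) = v * g v - F (g v)"
proof (rule cSup_eq_maximum)
  show "v * g v - F (g v) \<in> range (\<lambda>u. v * u - F u)" by auto
  fix y assume "y \<in> range (\<lambda>u. v * u - F u)"
  then obtain w where "y = v * w - F w" by auto
  moreover have "F (g v) + v * (w - g v) \<le> F w" using sub[of "g v" w] inv by simp
  ultimately show "y \<le> v * g v - F (g v)" by (simp add: algebra_simps)
qed

lemma conj_deriv:
  fixes F f g :: "real \<Rightarrow> real"
  assumes sub: "\<And>u w. F u + f u * (w - u) \<le> F w"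
    and inv: "\<And>v. f (g v) = v"
    and gc: "\<And>v. isCont g v"
  shows "((\<lambda>v. SUP u. v * u - F u) has_real_derivative g x) (at x)"
proof -
  define G where "G = (\<lambda>v. v * g v - F (g v))"
  have GG: "(\<lambda>v. SUP u. v * u - F u) = G"
    by (rule ext, unfold G_def, rule conj_val[OF sub inv])
  have low: "(y - z) * g z \<le> G y - G z" for y z
    using sub[of "g z" "g y"] sub[of "g y" "g z"] inv[of y] inv[of z]
    by (simp add: G_def algebra_simps)
  have "((\<lambda>y. (G y - G x) / (y - x) - g x) \<longlongrightarrow> 0) (at x)"
  proof (rule Lim_null_comparison)
    have "norm ((G y - G x) / (y - x) - g x) \<le> \<bar>g y - g x\<bar>" if "y \<noteq> x" for y
    proof (cases "x < y")
      case True
      have "(y - x) * g x \<le> G y - G x" "G y - G x \<le> (y - x) * g y"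
        using low[of y x] low[of x y] by (auto simp: algebra_simps)
      hence "g x \<le> (G y - G x) / (y - x)" "(G y - G x) / (y - x) \<le> g y"
        using True by (auto simp: field_simps)
      thus ?thesis by simp
    next
      case False
      hence lt: "y < x" using that by simp
      have "(x - y) * g y \<le> G x - G y" "G x - G y \<le> (x - y) * g x"
        using low[of y x] low[of x y] by (auto simp: algebra_simps)
      hence "g y \<le> (G x - G y) / (x - y)" "(G x - G y) / (x - y) \<le> g x"
        using lt by (auto simp: field_simps)
      moreover have "(G x - G y) / (x - y) = (G y - G x) / (y - x)"
        by (metis minus_diff_eq minus_divide_divide)
      ultimately show ?thesis by simp
    qed
    thus "\<forall>\<^sub>F y in at x. norm ((G y - G x) / (y - x) - g x) \<le> \<bar>g y - g x\<bar>"
      unfolding eventually_at_filter by (intro always_eventually) auto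
    have "(g \<longlongrightarrow> g x) (at x)" using gc[of x] by (simp add: isCont_def)
    hence "((\<lambda>y. g y - g x) \<longlongrightarrow> 0) (at x)" by (simp add: LIM_zero_iff)
    thus "((\<lambda>y. \<bar>g y - g x\<bar>) \<longlongrightarrow> 0) (at x)" using tendsto_rabs_zero by blast
  qed
  hence "(G has_real_derivative g x) (at x)"
    by (simp add: has_field_derivative_iff LIM_zero_iff)
  thus ?thesis by (simp add: GG)
qed

lemma quad_aux:
  fixes A B u w :: real
  assumes A: "A > 0" and B: "B > 0" and uw: "u * w \<le> 0"
  shows "\<bar>B * w\<^sup>2 / 2 + A * u\<^sup>2 / 2 - A * (u * w)\<bar> \<le> (A + B) * (w - u)\<^sup>2"
proof -
  have t1: "0 \<le> B * w\<^sup>2 / 2" "0 \<le> A * u\<^sup>2 / 2" "0 \<le> - (A * (u * w))"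
    using A B uw by (auto simp: mult_nonneg_nonpos)
  have "B * w\<^sup>2 \<le> (A + B) * w\<^sup>2" using A by (intro mult_right_mono) auto
  hence s1: "B * w\<^sup>2 / 2 \<le> (A + B) * w\<^sup>2" using t1 by linarith
  have "A * u\<^sup>2 \<le> (A + B) * u\<^sup>2" using B by (intro mult_right_mono) auto
  hence s2: "A * u\<^sup>2 / 2 \<le> (A + B) * u\<^sup>2" using t1 by linarith
  have "A * (- (u * w)) \<le> (A + B) * (- (u * w))" using B uw by (intro mult_right_mono) auto
  hence s3: "- (A * (u * w)) \<le> (A + B) * (- 2 * (u * w))" using t1 by (simp add: algebra_simps)
  have ex: "(A + B) * (w - u)\<^sup>2 = (A + B) * w\<^sup>2 + (A + B) * u\<^sup>2 + (A + B) * (- 2 * (u * w))"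
    by (simp add: power2_eq_square algebra_simps)
  show ?thesis using t1 s1 s2 s3 ex by (simp add: abs_le_iff)
qed

lemma H_quad:
  fixes A B u w :: real
  assumes A: "A > 0" and B: "B > 0"
  shows "\<bar>(A * (max w 0)\<^sup>2 / 2 + B * (max (- w) 0)\<^sup>2 / 2)
        - (A * (max u 0)\<^sup>2 / 2 + B * (max (- u) 0)\<^sup>2 / 2)
        - (A * max u 0 - B * max (- u) 0) * (w - u)\<bar> \<le> (A + B) * (w - u)\<^sup>2"
    (is "\<bar>?E\<bar> \<le> _")
proof (cases "0 \<le> u"; cases "0 \<le> w")
  assume h: "0 \<le> u" "0 \<le> w"
  hence e: "max w 0 = w" "max (-w) 0 = 0" "max u 0 = u" "max (-u) 0 = 0" by auto
  have eq: "?E = A / 2 * (w - u)\<^sup>2"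
    unfolding e by (simp add: power2_eq_square algebra_simps)
  have "A / 2 * (w - u)\<^sup>2 \<le> (A + B) * (w - u)\<^sup>2" using A B by (intro mult_right_mono) auto
  thus ?thesis using A unfolding eq by simp
next
  assume h: "0 \<le> u" "\<not> 0 \<le> w"
  hence e: "max w 0 = 0" "max (-w) 0 = -w" "max u 0 = u" "max (-u) 0 = 0" by auto
  have uw: "u * w \<le> 0" using h by (simp add: mult_nonneg_nonpos)
  have eq: "?E = B * w\<^sup>2 / 2 + A * u\<^sup>2 / 2 - A * (u * w)"
    unfolding e by (simp add: power2_eq_square algebra_simps)
  show ?thesis using quad_aux[OF A B uw] unfolding eq .
next
  assume h: "\<not> 0 \<le> u" "0 \<le> w"
  hence e: "max w 0 = w" "max (-w) 0 = 0" "max u 0 = 0" "max (-u) 0 = -u" by auto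
  have uw: "u * w \<le> 0" using h by (simp add: mult_nonpos_nonneg)
  have eq: "?E = A * w\<^sup>2 / 2 + B * u\<^sup>2 / 2 - B * (u * w)"
    unfolding e by (simp add: power2_eq_square algebra_simps)
  show ?thesis using quad_aux[OF B A uw] unfolding eq by (simp add: add.commute)
next
  assume h: "\<not> 0 \<le> u" "\<not> 0 \<le> w"
  hence e: "max w 0 = 0" "max (-w) 0 = -w" "max u 0 = 0" "max (-u) 0 = -u" by auto
  have eq: "?E = B / 2 * (w - u)\<^sup>2"
    unfolding e by (simp add: power2_eq_square algebra_simps)
  have "B / 2 * (w - u)\<^sup>2 \<le> (A + B) * (w - u)\<^sup>2" using A B by (intro mult_right_mono) auto
  thus ?thesis using B unfolding eq by simp
qed

lemma hi_lip:
  fixes A B x y :: real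
  assumes A: "A > 0" and B: "B > 0"
  shows "\<bar>(max x 0 / A - max (-x) 0 / B) - (max y 0 / A - max (-y) 0 / B)\<bar> \<le> \<bar>x - y\<bar> / min A B"
proof -
  have iA: "1 / A \<le> 1 / min A B" and iB: "1 / B \<le> 1 / min A B"
    using A B by (auto simp: frac_le min_def)
  have "\<bar>(max x 0 / A - max (-x) 0 / B) - (max y 0 / A - max (-y) 0 / B)\<bar>
      \<le> \<bar>max x 0 - max y 0\<bar> * (1/A) + \<bar>max (-x) 0 - max (-y) 0\<bar> * (1/B)"
  proof -
    have "(max x 0 / A - max (-x) 0 / B) - (max y 0 / A - max (-y) 0 / B)
        = (max x 0 - max y 0) * (1/A) - (max (-x) 0 - max (-y) 0) * (1/B)"
      by (simp add: diff_divide_distrib)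
    also have "\<bar>\<dots>\<bar> \<le> \<bar>(max x 0 - max y 0) * (1/A)\<bar> + \<bar>(max (-x) 0 - max (-y) 0) * (1/B)\<bar>"
      by (rule abs_triangle_ineq4)
    also have "\<dots> = \<bar>max x 0 - max y 0\<bar> * (1/A) + \<bar>max (-x) 0 - max (-y) 0\<bar> * (1/B)"
      using A B by (simp add: abs_mult)
    finally show ?thesis .
  qed
  also have "\<dots> \<le> \<bar>max x 0 - max y 0\<bar> * (1 / min A B) + \<bar>max (-x) 0 - max (-y) 0\<bar> * (1 / min A B)"
    by (intro add_mono mult_left_mono iA iB) auto
  also have "\<dots> = (\<bar>max x 0 - max y 0\<bar> + \<bar>max (-x) 0 - max (-y) 0\<bar>) / min A B"
    by (simp add: add_divide_distrib)
  also have "\<dots> = \<bar>x - y\<bar> / min A B"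
    by (cases "0 \<le> x"; cases "0 \<le> y") (auto simp: max_def)
  finally show ?thesis .
qed

lemma h_lower:
  fixes A B u :: real
  assumes A: "A > 0" and B: "B > 0"
  shows "min A B * \<bar>u\<bar> \<le> \<bar>A * max u 0 - B * max (- u) 0\<bar>"
proof (cases "0 \<le> u")
  case True thus ?thesis using A B by (simp add: max_def mult_right_mono)
next
  case False
  hence "min A B * \<bar>u\<bar> \<le> B * \<bar>u\<bar>" by (intro mult_right_mono) auto
  thus ?thesis using False B by (simp add: max_def abs_mult)
qed

lemma h_upper:
  fixes A B u :: real
  assumes A: "A > 0" and B: "B > 0"
  shows "\<bar>A * max u 0 - B * max (- u) 0\<bar> \<le> (A + B) * \<bar>u\<bar>"
proof (cases "0 \<le> u")
  case True thus ?thesis using A B by (simp add: max_def abs_mult algebra_simps)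
next
  case False
  hence "max u 0 = 0" "max (-u) 0 = -u" by auto
  thus ?thesis using A B False mult_pos_neg[of A u] by (simp add: abs_mult algebra_simps)
qed

lemma final_est:
  fixes m eps e M U V P D :: real
  assumes m: "m > 0" and eps: "eps > 0" and M: "M \<ge> 0"
    and e1: "e \<le> m / 2" and e2: "e \<le> eps * m\<^sup>2 / 4" and e0: "e > 0"
    and U: "U \<ge> 0"
    and P: "P \<le> e * U + M" and mU: "m * U \<le> V + P" and D: "D \<le> P / m"
    and V: "V \<ge> M + 2 * M / (m * eps) + 1"
  shows "D \<le> eps * V"
proof -
  have "(m - e) * U \<le> V + M" using P mU by (simp add: algebra_simps)
  moreover have "m / 2 * U \<le> (m - e) * U" using e1 U by (intro mult_right_mono) auto
  ultimately have "m / 2 * U \<le> V + M" by linarith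
  hence Ub: "U \<le> 2 * (V + M) / m" using m by (simp add: field_simps)
  have "e * U \<le> (eps * m\<^sup>2 / 4) * (2 * (V + M) / m)"
    using e2 Ub U e0 by (intro mult_mono) auto
  also have "\<dots> = eps * m * (V + M) / 2" using m by (simp add: power2_eq_square field_simps)
  finally have "P \<le> eps * m * (V + M) / 2 + M" using P by linarith
  hence "P / m \<le> (eps * m * (V + M) / 2 + M) / m" using m by (intro divide_right_mono) auto
  also have "\<dots> = eps * (V + M) / 2 + M / m" using m by (simp add: field_simps)
  also have "\<dots> \<le> eps * V"
  proof -
    have "eps * (M + 2 * M / (m * eps)) \<le> eps * V" using V eps by (intro mult_left_mono) auto
    moreover have "eps * (M + 2 * M / (m * eps)) = eps * M + 2 * M / m" using m eps by (simp add: field_simps)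
    ultimately show ?thesis by (simp add: field_simps)
  qed
  finally show ?thesis using D by linarith
qed



theorem lemma3:
  fixes k :: int and eps1 eps2 a b :: real
    and p :: "real \<Rightarrow> real \<Rightarrow> real \<Rightarrow> real"
  defines "mu \<equiv> max 0 (- 1 / (real_of_int (lam (k - 1)) + eps1)) + eps2"
  defines "pk \<equiv> real_of_int (lam (k - 1)) + eps1"
  defines "qk \<equiv> real_of_int (lam (k - 1)) + eps1 + 1 / mu"
  assumes k_nz: "k \<noteq> 0"
    and eps1_pos: "0 < eps1"
    and eps1_lt: "eps1 < real_of_int (lam k) - real_of_int (lam (k - 1))"
    and eps2_pos: "0 < eps2"
    and eps2_lt: "eps2 < 1 / (real_of_int (lam k) - real_of_int (lam (k - 1)) - eps1)
                        - max 0 (- 1 / (real_of_int (lam (k - 1)) + eps1))"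
    and a_in: "a \<in> {pk<..<qk}" and b_in: "b \<in> {pk<..<qk}"
    and p_cont: "continuous_on ({0..pi} \<times> UNIV \<times> UNIV) (\<lambda>(s, t, u). p s t u)"
    and p_per: "\<And>s t u. p s (t + 2 * pi) u = p s t u"
    and p_sublin: "\<forall>e>0. \<exists>R. \<forall>s\<in>{0..pi}. \<forall>t u. R \<le> \<bar>u\<bar> \<longrightarrow> \<bar>p s t u / u\<bar> \<le> e"
    and mono_inc: "\<And>s t u w. s \<in> {0..pi} \<Longrightarrow> u < w \<Longrightarrow>
        a * max u 0 - b * max (- u) 0 + p s t u - pk * u
          < a * max w 0 - b * max (- w) 0 + p s t w - pk * w"
    and mono_dec: "\<And>s t u w. s \<in> {0..pi} \<Longrightarrow> u < w \<Longrightarrow>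
        a * max w 0 - b * max (- w) 0 + p s t w - qk * w
          < a * max u 0 - b * max (- u) 0 + p s t u - qk * u"
  defines "H \<equiv> \<lambda>u::real. (a - pk) * (max u 0)\<^sup>2 / 2 + (b - pk) * (max (- u) 0)\<^sup>2 / 2"
  defines "P \<equiv> \<lambda>s t u. oint (p s t) u"
  defines "J \<equiv> \<lambda>s t u. H u + P s t u"
  defines "Jstar \<equiv> \<lambda>s t v. (SUP u. v * u - J s t u)"
  defines "Hstar \<equiv> \<lambda>v::real. (max v 0)\<^sup>2 / (2 * (a - pk)) + (max (- v) 0)\<^sup>2 / (2 * (b - pk))"
  defines "Q \<equiv> \<lambda>s t v. Jstar s t v - Hstar v"
  defines "q \<equiv> \<lambda>s t v. deriv (Q s t) v"
  shows "\<forall>e>0. \<exists>R. \<forall>s\<in>{0..pi}. \<forall>t v. R \<le> \<bar>v\<bar> \<longrightarrow> \<bar>q s t v / v\<bar> \<le> e"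
proof -
  have mu_pos: "mu > 0" unfolding mu_def using eps2_pos max.cobounded1[of 0 "- 1 / (real_of_int (lam (k - 1)) + eps1)"] by linarith
  have qp: "qk = pk + 1 / mu" by (simp add: qk_def pk_def)
  define A where "A = a - pk"
  define B where "B = b - pk"
  have A: "A > 0" using a_in by (simp add: A_def)
  have B: "B > 0" using b_in by (simp add: B_def)
  define m where "m = min A B"
  have m: "m > 0" using A B by (simp add: m_def)
  define h where "h = (\<lambda>u::real. A * max u 0 - B * max (- u) 0)"
  define hi where "hi = (\<lambda>v::real. max v 0 / A - max (- v) 0 / B)"
  have hhi: "h (hi v) = v" for v
    using A B by (cases "0 \<le> v") (auto simp: h_def hi_def max_def zero_le_divide_iff divide_le_0_iff)
  have h_mono: "h u \<le> h w" if "u \<le> w" for u w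
  proof -
    have "A * max u 0 \<le> A * max w 0" using A that by (intro mult_left_mono) auto
    moreover have "B * max (- w) 0 \<le> B * max (- u) 0" using B that by (intro mult_left_mono) auto
    ultimately show ?thesis unfolding h_def by linarith
  qed
  have hih: "hi (h u) = u" for u
    using A B by (cases "0 \<le> u") (auto simp: h_def hi_def max_def mult_pos_neg zero_le_mult_iff mult_le_0_iff)
  have HH: "H = (\<lambda>u. A * (max u 0)\<^sup>2 / 2 + B * (max (- u) 0)\<^sup>2 / 2)"
    by (simp add: H_def A_def B_def)
  have H_der: "(H has_real_derivative h u) (at u)" for u
    by (rule quad_deriv[where C = "A + B"]) (unfold HH h_def, rule H_quad[OF A B])
  have H_sub: "H u + h u * (w - u) \<le> H w" for u w
    by (rule subgrad[OF H_der h_mono])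
  have hi_cont: "isCont hi v" for v
    unfolding hi_def by (intro continuous_intros) (use A B in auto)
  have HS: "Hstar = (\<lambda>v. (max v 0)\<^sup>2 / (2 * A) + (max (- v) 0)\<^sup>2 / (2 * B))"
    by (simp add: Hstar_def A_def B_def)
  have Hstar_eq: "Hstar = (\<lambda>v. SUP u. v * u - H u)"
  proof
    fix v
    have "(SUP u. v * u - H u) = v * hi v - H (hi v)" by (rule conj_val[OF H_sub hhi])
    also have "\<dots> = Hstar v"
    proof (cases "0 \<le> v")
      case True
      hence e: "max v 0 = v" "max (- v) 0 = 0" "max (v / A) 0 = v / A" "max (- (v / A)) 0 = 0"
        using A by (auto simp: zero_le_divide_iff)
      show ?thesis using A unfolding HS HH hi_def
        by (simp add: e power2_eq_square field_simps)
    next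
      case False
      hence e: "max v 0 = 0" "max (- v) 0 = - v" "max (- (v / B)) 0 = - (v / B)" "max (v / B) 0 = 0"
        using B by (auto simp: zero_le_divide_iff divide_le_0_iff)
      show ?thesis using B unfolding HS HH hi_def
        by (simp add: e power2_eq_square field_simps)
    qed
    finally show "Hstar v = (SUP u. v * u - H u)" by simp
  qed
  have Hstar_der: "(Hstar has_real_derivative hi v) (at v)" for v
    unfolding Hstar_eq by (rule conj_deriv[OF H_sub hhi hi_cont])
  define jj where "jj = (\<lambda>s t u. h u + p s t u)"
  have jeq: "a * max u 0 - b * max (- u) 0 + p s t u - pk * u = jj s t u" for s t u
    by (cases "0 \<le> u") (auto simp: jj_def h_def A_def B_def max_def algebra_simps)
  have jmono: "jj s t u < jj s t w" if "s \<in> {0..pi}" "u < w" for s t u w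
    using mono_inc[OF that] by (simp add: jeq)
  have pcont: "continuous_on UNIV (p s t)" if "s \<in> {0..pi}" for s t
  proof -
    have "continuous_on UNIV (\<lambda>u. (\<lambda>(s, t, u). p s t u) (s, t, u))"
      by (rule continuous_on_compose2[OF p_cont]) (use that in \<open>auto intro!: continuous_intros\<close>)
    thus ?thesis by simp
  qed
  have jcont: "isCont (jj s t) u" if "s \<in> {0..pi}" for s t u
  proof -
    have "isCont (p s t) u" using pcont[OF that] continuous_on_eq_continuous_at[of UNIV] by auto
    moreover have "isCont h u" unfolding h_def by (intro continuous_intros)
    ultimately show ?thesis unfolding jj_def by (intro continuous_intros) auto
  qed
  have pbound: "\<exists>M\<ge>0. \<forall>s\<in>{0..pi}. \<forall>t u. \<bar>p s t u\<bar> \<le> e * \<bar>u\<bar> + M" if e: "e > 0" for e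
  proof -
    obtain R0 where R0: "\<forall>s\<in>{0..pi}. \<forall>t u. R0 \<le> \<bar>u\<bar> \<longrightarrow> \<bar>p s t u / u\<bar> \<le> e"
      using p_sublin e by blast
    define R where "R = max R0 1"
    have big: "\<bar>p s t u\<bar> \<le> e * \<bar>u\<bar>" if "s \<in> {0..pi}" "R \<le> \<bar>u\<bar>" for s t u
    proof -
      have "\<bar>p s t u / u\<bar> \<le> e" using R0 that by (auto simp: R_def)
      moreover have "u \<noteq> 0" using that by (auto simp: R_def)
      ultimately show ?thesis by (simp add: abs_divide field_simps)
    qed
    define M where "M = (2 * (A + B) + e) * R"
    have R1: "R \<ge> 1" by (simp add: R_def)
    have "M \<ge> 0" using A B e R1 by (simp add: M_def)
    moreover have "\<bar>p s t u\<bar> \<le> e * \<bar>u\<bar> + M" if s: "s \<in> {0..pi}" for s t u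
    proof (cases "R \<le> \<bar>u\<bar>")
      case True thus ?thesis using big[of s u t] s True \<open>M \<ge> 0\<close> by linarith
    next
      case False
      hence "- R \<le> u" "u \<le> R" by auto
      hence lo: "jj s t (- R) \<le> jj s t u" and up: "jj s t u \<le> jj s t R"
        using jmono[OF s] by (auto simp: le_less)
      have p1: "\<bar>p s t R\<bar> \<le> e * R" using big[of s R t] s R1 by simp
      have p2: "\<bar>p s t (- R)\<bar> \<le> e * R" using big[of s "- R" t] s R1 by simp
      have hR: "\<bar>h R\<bar> \<le> (A + B) * R" "\<bar>h (- R)\<bar> \<le> (A + B) * R"
        using h_upper[OF A B, of R] h_upper[OF A B, of "- R"] R1 unfolding h_def by simp_all
      have hu: "\<bar>h u\<bar> \<le> (A + B) * R"
      proof -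
        have "\<bar>h u\<bar> \<le> (A + B) * \<bar>u\<bar>" using h_upper[OF A B, of u] by (simp add: h_def)
        also have "\<dots> \<le> (A + B) * R" using False A B by (intro mult_left_mono) auto
        finally show ?thesis .
      qed
      have "\<bar>jj s t u\<bar> \<le> (A + B) * R + e * R"
        using lo up p1 p2 hR unfolding jj_def by (auto simp: abs_le_iff)
      hence "\<bar>p s t u\<bar> \<le> 2 * ((A + B) * R) + e * R" using hu unfolding jj_def abs_le_iff by linarith
      moreover have "M = 2 * ((A + B) * R) + e * R" by (simp add: M_def algebra_simps)
      moreover have "e * \<bar>u\<bar> \<ge> 0" using e by simp
      ultimately show ?thesis by linarith
    qed
    ultimately show ?thesis by blast
  qed
  have jsurj: "\<exists>u. jj s t u = v" if s: "s \<in> {0..pi}" for s t v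
  proof -
    obtain M where M: "M \<ge> 0" "\<forall>s\<in>{0..pi}. \<forall>t u. \<bar>p s t u\<bar> \<le> m / 2 * \<bar>u\<bar> + M"
      using pbound[of "m / 2"] m by auto
    define U where "U = 2 * (\<bar>v\<bar> + M) / m + 1"
    have "2 * (\<bar>v\<bar> + M) / m \<ge> 0" using m M by simp
    hence U: "U > 0" unfolding U_def by linarith
    have "m * U \<le> \<bar>h U\<bar>" using h_lower[OF A B, of U] U by (simp add: h_def m_def)
    hence hU: "m * U \<le> h U" using U A by (simp add: h_def)
    have "m * U \<le> \<bar>h (- U)\<bar>" using h_lower[OF A B, of "- U"] U by (simp add: h_def m_def)
    hence hU2: "m * U \<le> - h (- U)" using U B by (simp add: h_def)
    have pU: "\<bar>p s t U\<bar> \<le> m / 2 * U + M" "\<bar>p s t (- U)\<bar> \<le> m / 2 * U + M"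
      using M(2)[rule_format, OF s, of t U] M(2)[rule_format, OF s, of t "- U"] U by simp_all
    have mU: "m / 2 * U = \<bar>v\<bar> + M + m / 2" using m by (simp add: U_def field_simps)
    have "v \<le> jj s t U" using hU pU mU abs_ge_self[of v] m unfolding jj_def abs_le_iff by linarith
    moreover have "jj s t (- U) \<le> v" using hU2 pU mU abs_ge_minus_self[of v] m unfolding jj_def abs_le_iff by linarith
    ultimately obtain u where "jj s t u = v"
      using IVT[of "jj s t" "- U" v U] U jcont[OF s] by auto
    thus ?thesis by blast
  qed
  define g where "g = (\<lambda>s t v. THE u. jj s t u = v)"
  have jg: "jj s t (g s t v) = v" if s: "s \<in> {0..pi}" for s t v
  proof -
    have "\<exists>!u. jj s t u = v"
      using jsurj[OF s] jmono[OF s] by (metis linorder_neqE_linordered_idom less_irrefl)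
    thus ?thesis unfolding g_def by (rule theI')
  qed
  have gj: "g s t (jj s t u) = u" if s: "s \<in> {0..pi}" for s t u
    unfolding g_def
    by (rule the_equality) (simp, metis jmono[OF s] less_irrefl linorder_neqE_linordered_idom)
  have gcont: "isCont (g s t) v" if s: "s \<in> {0..pi}" for s t v
  proof -
    have "isCont (g s t) (jj s t (g s t v))"
      by (rule isCont_inverse_function[where d = 1]) (use gj[OF s] jcont[OF s] in auto)
    thus ?thesis using jg[OF s] by simp
  qed
  have J_der: "(J s t has_real_derivative jj s t u) (at u)" if s: "s \<in> {0..pi}" for s t u
  proof -
    have "((\<lambda>u. H u + P s t u) has_real_derivative h u + p s t u) (at u)"
      unfolding P_def by (intro DERIV_add H_der oint_deriv pcont[OF s])
    thus ?thesis by (simp add: J_def jj_def)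
  qed
  have J_sub: "J s t u + jj s t u * (w - u) \<le> J s t w" if s: "s \<in> {0..pi}" for s t u w
    by (rule subgrad[OF J_der[OF s]]) (use jmono[OF s] in \<open>auto simp: le_less\<close>)
  have Jstar_der: "(Jstar s t has_real_derivative g s t v) (at v)" if s: "s \<in> {0..pi}" for s t v
  proof -
    have "Jstar s t = (\<lambda>v. SUP u. v * u - J s t u)" by (simp add: Jstar_def)
    thus ?thesis using conj_deriv[OF J_sub[OF s] jg[OF s] gcont[OF s]] by simp
  qed
  have q_eq: "q s t v = g s t v - hi v" if s: "s \<in> {0..pi}" for s t v
  proof -
    have "(Q s t has_real_derivative g s t v - hi v) (at v)"
      unfolding Q_def by (intro DERIV_diff Jstar_der[OF s] Hstar_der)
    thus ?thesis unfolding q_def by (rule DERIV_imp_deriv)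
  qed
  show ?thesis
  proof (intro allI impI)
    fix eps :: real assume eps: "eps > 0"
    define e where "e = min (m / 2) (eps * m\<^sup>2 / 4)"
    have e0: "e > 0" using m eps by (simp add: e_def)
    obtain M where M: "M \<ge> 0" "\<forall>s\<in>{0..pi}. \<forall>t u. \<bar>p s t u\<bar> \<le> e * \<bar>u\<bar> + M"
      using pbound[OF e0] by auto
    show "\<exists>R. \<forall>s\<in>{0..pi}. \<forall>t v. R \<le> \<bar>v\<bar> \<longrightarrow> \<bar>q s t v / v\<bar> \<le> eps"
    proof (intro exI ballI allI impI)
      fix s t v assume s: "s \<in> {0..pi}" and V: "M + 2 * M / (m * eps) + 1 \<le> \<bar>v\<bar>"
      define u where "u = g s t v"
      have vu: "v = h u + p s t u" using jg[OF s, of t v] by (simp add: u_def jj_def)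
      have P: "\<bar>p s t u\<bar> \<le> e * \<bar>u\<bar> + M" using M s by auto
      have mU: "m * \<bar>u\<bar> \<le> \<bar>v\<bar> + \<bar>p s t u\<bar>"
      proof -
        have "m * \<bar>u\<bar> \<le> \<bar>h u\<bar>" using h_lower[OF A B, of u] by (simp add: h_def m_def)
        thus ?thesis using vu by linarith
      qed
      have D: "\<bar>u - hi v\<bar> \<le> \<bar>p s t u\<bar> / m"
      proof -
        have "hi (v - p s t u) = u"
          using hih[of u] vu by simp
        hence "\<bar>u - hi v\<bar> = \<bar>hi (v - p s t u) - hi v\<bar>" by simp
        also have "\<dots> \<le> \<bar>(v - p s t u) - v\<bar> / m"
          using hi_lip[OF A B, of "v - p s t u" v] by (simp add: hi_def m_def)
        finally show ?thesis by simp
      qed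
      have fin: "\<bar>u - hi v\<bar> \<le> eps * \<bar>v\<bar>"
        by (rule final_est[OF m eps M(1) _ _ e0 _ P mU D V]) (auto simp: e_def)
      have vpos: "\<bar>v\<bar> > 0" 
      proof -
        have "2 * M / (m * eps) \<ge> 0" using M m eps by simp
        thus ?thesis using V M by linarith
      qed
      have "\<bar>q s t v / v\<bar> = \<bar>u - hi v\<bar> / \<bar>v\<bar>" by (simp add: q_eq[OF s] u_def abs_divide)
      also have "\<dots> \<le> eps" using fin vpos by (simp add: divide_le_eq)
      finally show "\<bar>q s t v / v\<bar> \<le> eps" .
    qed
  qed
qed

end
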